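(* In the Tempered Gibbs Sampler setting below, let $b=\sup_{i,\boldsymbol{x}} f(x_i|\boldsymbol{x}_{-i})/g(x_i|\boldsymbol{x}_{-i})$. Let $\mathbf{X}\sim fZ$ and $W=w(\mathbf{X})$. Then $$\mathrm{Var}(W)\le b-1\qquad\text{and}\qquad \mathrm{var}(h,SIS)\le b\,\mathrm{var}_f(h),$$ where $\mathrm{var}_f(h)=\mathbb{E}_f[h^2]-\mathbb{E}_f[h]^2$.
   Context: Setting: $f$ is a probability density on $\mathcal{X}=\mathcal{X}_1\times\dots\times\mathcal{X}_d$; for each $i,\boldsymbol{x}_{-i}$, $g(\cdot|\boldsymbol{x}_{-i})$ is a probability density on $\mathcal{X}_i$ absolutely continuous w.r.t. the full conditional $f(\cdot|\boldsymbol{x}_{-i})$. Let $p_i(\boldsymbol{x})=g(x_i|\boldsymbol{x}_{-i})/f(x_i|\boldsymbol{x}_{-i})$, $Z(\boldsymbol{x})=\frac1d\sum_i p_i(\boldsymbol{x})$, $w=1/Z$; $fZ$ is a probability density on $\mathcal{X}$. For $h\in L^1(\mathcal{X},f)$, the self-normalised importance sampling estimator is $\hat h_n^{SIS}=\sum_{i=1}^n w(\boldsymbol{y}^{(i)})h(\boldsymbol{y}^{(i)})/\sum_{i=1}^n w(\boldsymbol{y}^{(i)})$ with $\boldsymbol{y}^{(i)}$ i.i.d. from $fZ$, and $\mathrm{var}(h,SIS)=\lim_{n\to\infty}n\,\mathrm{var}(\hat h_n^{SIS})$, which equals $\mathbb{E}_f[\bar h^2 w]$ with $\bar h=h-\mathbb{E}_f[h]$.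 *)

theory Defs
  imports "HOL-Probability.Probability"
begin

text \<open>Coordinates are indexed by i < d;
  coordinate space i is the measure space M i (all on a common carrier type 'a);
  the state space is the product measure PiM {..<d} M; points are x :: nat => 'a.
  f is a probability density w.r.t. the product measure;
  g i x t is the proposal density g(t | x_{-i}) on M i (it depends on x only through x_{-i}).\<close>

definition tgs_space :: "nat \<Rightarrow> (nat \<Rightarrow> 'a measure) \<Rightarrow> (nat \<Rightarrow> 'a) measure" where
  "tgs_space d M = PiM {..<d} M"

definition marg :: "(nat \<Rightarrow> 'a measure) \<Rightarrow> ((nat \<Rightarrow> 'a) \<Rightarrow> real) \<Rightarrow> nat \<Rightarrow> (nat \<Rightarrow> 'a) \<Rightarrow> ennreal" where
  "marg M f i x = (\<integral>\<^sup>+ t. ennreal (f (x(i := t))) \<partial>(M i))"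

text \<open>Full conditional density f(x_i | x_{-i}) = f(x) / marginal(x_{-i})
  (set to 0 where the marginal is 0 or infinite).\<close>
definition fcond :: "(nat \<Rightarrow> 'a measure) \<Rightarrow> ((nat \<Rightarrow> 'a) \<Rightarrow> real) \<Rightarrow> nat \<Rightarrow> (nat \<Rightarrow> 'a) \<Rightarrow> real" where
  "fcond M f i x = f x / enn2real (marg M f i x)"

definition pratio :: "(nat \<Rightarrow> 'a measure) \<Rightarrow> ((nat \<Rightarrow> 'a) \<Rightarrow> real) \<Rightarrow> (nat \<Rightarrow> (nat \<Rightarrow> 'a) \<Rightarrow> 'a \<Rightarrow> real)
    \<Rightarrow> nat \<Rightarrow> (nat \<Rightarrow> 'a) \<Rightarrow> real" where
  "pratio M f g i x = g i x (x i) / fcond M f i x"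

definition Zfun :: "nat \<Rightarrow> (nat \<Rightarrow> 'a measure) \<Rightarrow> ((nat \<Rightarrow> 'a) \<Rightarrow> real) \<Rightarrow> (nat \<Rightarrow> (nat \<Rightarrow> 'a) \<Rightarrow> 'a \<Rightarrow> real)
    \<Rightarrow> (nat \<Rightarrow> 'a) \<Rightarrow> real" where
  "Zfun d M f g x = (\<Sum>i<d. pratio M f g i x) / real d"

definition wfun :: "nat \<Rightarrow> (nat \<Rightarrow> 'a measure) \<Rightarrow> ((nat \<Rightarrow> 'a) \<Rightarrow> real) \<Rightarrow> (nat \<Rightarrow> (nat \<Rightarrow> 'a) \<Rightarrow> 'a \<Rightarrow> real)
    \<Rightarrow> (nat \<Rightarrow> 'a) \<Rightarrow> real" where
  "wfun d M f g x = 1 / Zfun d M f g x"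

text \<open>b = sup_{i,x} f(x_i|x_{-i}) / g(x_i|x_{-i}), in the extended reals
  (a ratio c/0 with c > 0 is +infinity, 0/0 = 0).\<close>
definition bconst :: "nat \<Rightarrow> (nat \<Rightarrow> 'a measure) \<Rightarrow> ((nat \<Rightarrow> 'a) \<Rightarrow> real) \<Rightarrow> (nat \<Rightarrow> (nat \<Rightarrow> 'a) \<Rightarrow> 'a \<Rightarrow> real)
    \<Rightarrow> ereal" where
  "bconst d M f g = (SUP ix \<in> {..<d} \<times> space (tgs_space d M).
       ereal (fcond M f (fst ix) (snd ix)) / ereal (g (fst ix) (snd ix) (snd ix (fst ix))))"

definition target :: "nat \<Rightarrow> (nat \<Rightarrow> 'a measure) \<Rightarrow> ((nat \<Rightarrow> 'a) \<Rightarrow> real) \<Rightarrow> (nat \<Rightarrow> 'a) measure" where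
  "target d M f = density (tgs_space d M) (\<lambda>x. ennreal (f x))"

definition tgs_dist :: "nat \<Rightarrow> (nat \<Rightarrow> 'a measure) \<Rightarrow> ((nat \<Rightarrow> 'a) \<Rightarrow> real) \<Rightarrow> (nat \<Rightarrow> (nat \<Rightarrow> 'a) \<Rightarrow> 'a \<Rightarrow> real)
    \<Rightarrow> (nat \<Rightarrow> 'a) measure" where
  "tgs_dist d M f g = density (tgs_space d M) (\<lambda>x. ennreal (f x * Zfun d M f g x))"

text \<open>var_f(h) = E_f[h^2] - E_f[h]^2 (extended real; +infinity if E_f[h^2] is infinite).\<close>
definition var_f :: "nat \<Rightarrow> (nat \<Rightarrow> 'a measure) \<Rightarrow> ((nat \<Rightarrow> 'a) \<Rightarrow> real) \<Rightarrow> ((nat \<Rightarrow> 'a) \<Rightarrow> real) \<Rightarrow> ereal" where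
  "var_f d M f h = enn2ereal (\<integral>\<^sup>+ x. ennreal ((h x)\<^sup>2) \<partial>(target d M f))
      - ereal ((\<integral> x. h x \<partial>(target d M f))\<^sup>2)"

text \<open>Asymptotic variance of the self-normalised IS estimator, var(h,SIS) = E_f[hbar^2 w],
  with hbar = h - E_f[h] (identity stated in the setting).\<close>
definition var_SIS :: "nat \<Rightarrow> (nat \<Rightarrow> 'a measure) \<Rightarrow> ((nat \<Rightarrow> 'a) \<Rightarrow> real) \<Rightarrow> (nat \<Rightarrow> (nat \<Rightarrow> 'a) \<Rightarrow> 'a \<Rightarrow> real)
    \<Rightarrow> ((nat \<Rightarrow> 'a) \<Rightarrow> real) \<Rightarrow> ereal" where
  "var_SIS d M f g h = enn2ereal (\<integral>\<^sup>+ x. ennreal ((h x - (\<integral> y. h y \<partial>(target d M f)))\<^sup>2 * wfun d M f g x)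
      \<partial>(target d M f))"

definition var_W :: "nat \<Rightarrow> (nat \<Rightarrow> 'a measure) \<Rightarrow> ((nat \<Rightarrow> 'a) \<Rightarrow> real) \<Rightarrow> (nat \<Rightarrow> (nat \<Rightarrow> 'a) \<Rightarrow> 'a \<Rightarrow> real)
    \<Rightarrow> ereal" where
  "var_W d M f g = enn2ereal (\<integral>\<^sup>+ x. ennreal ((wfun d M f g x - (\<integral> y. wfun d M f g y \<partial>(tgs_dist d M f g)))\<^sup>2)
      \<partial>(tgs_dist d M f g))"

end

theory Submission
  imports Defs
begin

lemma marg_upd[simp]: "marg M f i (x(i := t)) = marg M f i x"
  unfolding marg_def by simp

lemma marg_meas:
  fixes d i :: nat
  assumes i: "i < d" and J: "J \<union> {i} = {..<d}" and sf: "sigma_finite_measure (M i)"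
    and fm: "f \<in> borel_measurable (PiM {..<d} M)"
  shows "marg M f i \<in> borel_measurable (PiM J M)"
proof -
  interpret sigma_finite_measure "M i" by fact
  have up: "(\<lambda>p. (fst p)(i := snd p)) \<in> measurable (PiM J M \<Otimes>\<^sub>M M i) (PiM {..<d} M)"
    by (rule measurable_fun_upd[OF J[symmetric]]) auto
  have "(\<lambda>p. ennreal (f ((fst p)(i := snd p)))) \<in> borel_measurable (PiM J M \<Otimes>\<^sub>M M i)"
    using measurable_compose[OF up fm] by measurable
  then have "case_prod (\<lambda>x t. ennreal (f (x(i := t)))) \<in> borel_measurable (PiM J M \<Otimes>\<^sub>M M i)"
    by (simp add: case_prod_beta')
  from borel_measurable_nn_integral[OF this] show ?thesis
    unfolding marg_def by simp
qed

lemma split_int: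
  fixes d i :: nat
  assumes ps: "product_sigma_finite M" and i: "i < d"
    and F: "F \<in> borel_measurable (PiM {..<d} M)"
  shows "(\<integral>\<^sup>+ x. F x \<partial>PiM {..<d} M) = (\<integral>\<^sup>+ x. (\<integral>\<^sup>+ t. F (x(i := t)) \<partial>M i) \<partial>PiM ({..<d} - {i}) M)"
proof -
  interpret product_sigma_finite M by fact
  have e: "insert i ({..<d} - {i}) = {..<d}" using i by auto
  show ?thesis
    using F by (intro product_nn_integral_insert[of "{..<d} - {i}" i F, unfolded e]) auto
qed

lemma upd_space:
  fixes d i :: nat
  assumes "i < d" "y \<in> space (PiM ({..<d} - {i}) M)" "t \<in> space (M i)"
  shows "y(i := t) \<in> space (PiM {..<d} M)"
proof -
  have e: "insert i ({..<d} - {i}) = {..<d}" using assms by auto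
  show ?thesis using assms PiE_fun_upd[of t "\<lambda>j. space (M j)" i y "{..<d} - {i}"]
    unfolding space_PiM e by auto
qed

context
  fixes d i :: nat and M :: "nat \<Rightarrow> 'a measure" and f :: "(nat \<Rightarrow> 'a) \<Rightarrow> real"
  assumes ps: "product_sigma_finite M" and i: "i < d"
    and fm: "f \<in> borel_measurable (PiM {..<d} M)"
    and fnn: "\<And>x. x \<in> space (PiM {..<d} M) \<Longrightarrow> 0 \<le> f x"
    and fprob: "(\<integral>\<^sup>+ x. ennreal (f x) \<partial>PiM {..<d} M) = 1"
begin

lemma sfi: "sigma_finite_measure (M i)"
  using ps unfolding product_sigma_finite_def by auto

lemma marg_meas_full: "marg M f i \<in> borel_measurable (PiM {..<d} M)"
  by (rule marg_meas[OF i _ sfi fm]) (use i in auto)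

lemma marg_meas_minus: "marg M f i \<in> borel_measurable (PiM ({..<d} - {i}) M)"
  by (rule marg_meas[OF i _ sfi fm]) (use i in auto)

lemma marg_int: "(\<integral>\<^sup>+ y. marg M f i y \<partial>PiM ({..<d} - {i}) M) = 1"
  using split_int[OF ps i, of "\<lambda>x. ennreal (f x)"] fm fprob by (simp add: marg_def)

lemma marg_fin_AE: "AE y in PiM ({..<d} - {i}) M. marg M f i y \<noteq> \<infinity>"
  by (rule nn_integral_PInf_AE[OF marg_meas_minus]) (simp add: marg_int)

lemma marg_good_AE:
  "AE x in PiM {..<d} M. 0 < f x \<longrightarrow> 0 < marg M f i x \<and> marg M f i x < \<infinity>"
proof -
  define P where "P x = (marg M f i x = 0 \<or> marg M f i x = \<infinity>)" for x
  define F where "F x = (if P x then ennreal (f x) else 0)" for x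
  have Pm: "{x \<in> space (PiM {..<d} M). P x} \<in> sets (PiM {..<d} M)"
    unfolding P_def using marg_meas_full by measurable
  have Fm: "F \<in> borel_measurable (PiM {..<d} M)"
    unfolding F_def using Pm fm by measurable
  have "(\<integral>\<^sup>+ x. F x \<partial>PiM {..<d} M) = (\<integral>\<^sup>+ y. (\<integral>\<^sup>+ t. F (y(i := t)) \<partial>M i) \<partial>PiM ({..<d} - {i}) M)"
    by (rule split_int[OF ps i Fm])
  also have "\<dots> = (\<integral>\<^sup>+ y. (if P y then marg M f i y else 0) \<partial>PiM ({..<d} - {i}) M)"
    by (intro nn_integral_cong) (auto simp: F_def P_def marg_def)
  also have "\<dots> = (\<integral>\<^sup>+ y. 0 \<partial>PiM ({..<d} - {i}) M)"
    by (intro nn_integral_cong_AE) (use marg_fin_AE in \<open>auto simp: P_def\<close>)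
  finally have "(\<integral>\<^sup>+ x. F x \<partial>PiM {..<d} M) = 0" by simp
  then have "AE x in PiM {..<d} M. F x = 0"
    using nn_integral_0_iff_AE[OF Fm] by simp
  then show ?thesis
    by eventually_elim (auto simp: F_def P_def split: if_splits simp: less_top zero_less_iff_neq_zero)
qed


lemma fp_int:
  fixes g :: "nat \<Rightarrow> (nat \<Rightarrow> 'a) \<Rightarrow> 'a \<Rightarrow> real"
  assumes gj: "(\<lambda>x. g i x (x i)) \<in> borel_measurable (PiM {..<d} M)"
    and gm: "\<And>x. x \<in> space (PiM {..<d} M) \<Longrightarrow> g i x \<in> borel_measurable (M i)"
    and gnn: "\<And>x t. x \<in> space (PiM {..<d} M) \<Longrightarrow> t \<in> space (M i) \<Longrightarrow> 0 \<le> g i x t"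
    and gp: "\<And>x. x \<in> space (PiM {..<d} M) \<Longrightarrow> (\<integral>\<^sup>+ t. ennreal (g i x t) \<partial>M i) = 1"
    and gd: "\<And>x s. x \<in> space (PiM {..<d} M) \<Longrightarrow> s \<in> space (M i) \<Longrightarrow> g i (x(i := s)) = g i x"
    and t0: "t0 \<in> space (M i)"
  shows "(\<integral>\<^sup>+ x. ennreal (f x * pratio M f g i x) \<partial>PiM {..<d} M) \<le> 1"
proof -
  have "(\<integral>\<^sup>+ x. ennreal (f x * pratio M f g i x) \<partial>PiM {..<d} M)
      \<le> (\<integral>\<^sup>+ x. marg M f i x * ennreal (g i x (x i)) \<partial>PiM {..<d} M)"
  proof (intro nn_integral_mono)
    fix x assume x: "x \<in> space (PiM {..<d} M)"
    define m where "m = enn2real (marg M f i x)"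
    have xi: "x i \<in> space (M i)" using x i by (auto simp: space_PiM)
    have gv: "0 \<le> g i x (x i)" using gnn[OF x xi] .
    have m0: "0 \<le> m" unfolding m_def by simp
    have r: "f x * pratio M f g i x \<le> m * g i x (x i)"
    proof (cases "f x = 0 \<or> m = 0")
      case True then show ?thesis using gv m0
        by (auto simp: pratio_def fcond_def m_def)
    next
      case False then show ?thesis
        by (simp add: pratio_def fcond_def m_def[symmetric] field_simps)
    qed
    have "ennreal (f x * pratio M f g i x) \<le> ennreal (m * g i x (x i))"
      using r by (rule ennreal_leI)
    also have "\<dots> = ennreal m * ennreal (g i x (x i))" using m0 gv by (simp add: ennreal_mult)
    also have "\<dots> \<le> marg M f i x * ennreal (g i x (x i))"
      unfolding m_def by (intro mult_right_mono) (auto simp: ennreal_enn2real_if)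
    finally show "ennreal (f x * pratio M f g i x) \<le> marg M f i x * ennreal (g i x (x i))" .
  qed
  also have "\<dots> = (\<integral>\<^sup>+ y. (\<integral>\<^sup>+ t. marg M f i (y(i := t)) * ennreal (g i (y(i := t)) ((y(i := t)) i)) \<partial>M i) \<partial>PiM ({..<d} - {i}) M)"
    by (rule split_int[OF ps i]) (use marg_meas_full gj in measurable)
  also have "\<dots> = (\<integral>\<^sup>+ y. marg M f i y \<partial>PiM ({..<d} - {i}) M)"
  proof (intro nn_integral_cong)
    fix y assume y: "y \<in> space (PiM ({..<d} - {i}) M)"
    have y0: "y(i := t0) \<in> space (PiM {..<d} M)" by (rule upd_space[OF i y t0])
    have "(\<integral>\<^sup>+ t. marg M f i (y(i := t)) * ennreal (g i (y(i := t)) ((y(i := t)) i)) \<partial>M i)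
        = (\<integral>\<^sup>+ t. marg M f i y * ennreal (g i (y(i := t0)) t) \<partial>M i)"
    proof (intro nn_integral_cong)
      fix t assume t: "t \<in> space (M i)"
      have "g i ((y(i := t0))(i := t)) = g i (y(i := t0))" by (rule gd[OF y0 t])
      then show "marg M f i (y(i := t)) * ennreal (g i (y(i := t)) ((y(i := t)) i)) = marg M f i y * ennreal (g i (y(i := t0)) t)"
        by simp
    qed
    also have "\<dots> = marg M f i y * (\<integral>\<^sup>+ t. ennreal (g i (y(i := t0)) t) \<partial>M i)"
      by (rule nn_integral_cmult) (use gm[OF y0] in measurable)
    also have "\<dots> = marg M f i y" using gp[OF y0] by simp
    finally show "(\<integral>\<^sup>+ t. marg M f i (y(i := t)) * ennreal (g i (y(i := t)) ((y(i := t)) i)) \<partial>M i) = marg M f i y" .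
  qed
  also have "\<dots> = 1" by (rule marg_int)
  finally show ?thesis .
qed

end


lemma var_identity:
  fixes h :: "'b \<Rightarrow> real"
  assumes P: "prob_space T" and hi: "integrable T h"
  shows "enn2ereal (\<integral>\<^sup>+ x. ennreal ((h x)\<^sup>2) \<partial>T) - ereal ((\<integral> x. h x \<partial>T)\<^sup>2)
       = enn2ereal (\<integral>\<^sup>+ x. ennreal ((h x - (\<integral> y. h y \<partial>T))\<^sup>2) \<partial>T)"
proof -
  interpret prob_space T by fact
  define c where "c = (\<integral> y. h y \<partial>T)"
  have hm[measurable]: "h \<in> borel_measurable T" using hi by (rule borel_measurable_integrable)
  show ?thesis
  proof (cases "integrable T (\<lambda>x. (h x)\<^sup>2)")
    case True
    have i2: "integrable T (\<lambda>x. (h x - c)\<^sup>2)"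
      using True hi by (simp add: power2_diff)
    have "variance h = expectation (\<lambda>x. (h x)\<^sup>2) - (expectation h)\<^sup>2"
      by (rule variance_eq[OF hi True])
    moreover have "0 \<le> variance h" by simp
    moreover have "(\<integral>\<^sup>+ x. ennreal ((h x)\<^sup>2) \<partial>T) = ennreal (expectation (\<lambda>x. (h x)\<^sup>2))"
      by (rule nn_integral_eq_integral[OF True]) simp
    moreover have "(\<integral>\<^sup>+ x. ennreal ((h x - c)\<^sup>2) \<partial>T) = ennreal (variance h)"
      unfolding c_def by (rule nn_integral_eq_integral[OF i2[unfolded c_def]]) simp
    moreover have "0 \<le> expectation (\<lambda>x. (h x)\<^sup>2)" by simp
    ultimately show ?thesis unfolding c_def by simp
  next
    case False
    have n2: "\<not> integrable T (\<lambda>x. (h x - c)\<^sup>2)"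
    proof
      assume "integrable T (\<lambda>x. (h x - c)\<^sup>2)"
      then have "integrable T (\<lambda>x. (h x - c)\<^sup>2 + 2 * c * h x - c\<^sup>2)"
        using hi by auto
      moreover have "(\<lambda>x. (h x - c)\<^sup>2 + 2 * c * h x - c\<^sup>2) = (\<lambda>x. (h x)\<^sup>2)"
        by (auto simp: power2_diff)
      ultimately show False using False by simp
    qed
    have inf: "(\<integral>\<^sup>+ x. ennreal (F x) \<partial>T) = \<infinity>"
      if "\<not> integrable T F" "F \<in> borel_measurable T" "\<And>x. 0 \<le> F x" for F
    proof (rule ccontr)
      assume "(\<integral>\<^sup>+ x. ennreal (F x) \<partial>T) \<noteq> \<infinity>"
      then obtain r where "(\<integral>\<^sup>+ x. ennreal (F x) \<partial>T) = ennreal r"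
        by (cases "(\<integral>\<^sup>+ x. ennreal (F x) \<partial>T)") auto
      then have "integrable T F" using that by (intro integrableI_nn_integral_finite) auto
      with that show False by simp
    qed
    have "(\<integral>\<^sup>+ x. ennreal ((h x)\<^sup>2) \<partial>T) = \<infinity>" by (rule inf[OF False]) auto
    moreover have "(\<integral>\<^sup>+ x. ennreal ((h x - c)\<^sup>2) \<partial>T) = \<infinity>" by (rule inf[OF n2]) auto
    ultimately show ?thesis unfolding c_def by simp
  qed
qed

theorem proposition2:
  fixes d :: nat and M :: "nat \<Rightarrow> 'a measure"
    and f :: "(nat \<Rightarrow> 'a) \<Rightarrow> real"
    and g :: "nat \<Rightarrow> (nat \<Rightarrow> 'a) \<Rightarrow> 'a \<Rightarrow> real"
    and h :: "(nat \<Rightarrow> 'a) \<Rightarrow> real"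
  assumes d_pos: "d \<ge> 1"
    and sf: "\<And>i. i < d \<Longrightarrow> sigma_finite_measure (M i)"
    and f_meas: "f \<in> borel_measurable (tgs_space d M)"
    and f_nonneg: "\<And>x. x \<in> space (tgs_space d M) \<Longrightarrow> 0 \<le> f x"
    and f_prob: "(\<integral>\<^sup>+ x. ennreal (f x) \<partial>(tgs_space d M)) = 1"
    and g_meas: "\<And>i x. i < d \<Longrightarrow> x \<in> space (tgs_space d M) \<Longrightarrow> g i x \<in> borel_measurable (M i)"
    and g_nonneg: "\<And>i x t. i < d \<Longrightarrow> x \<in> space (tgs_space d M) \<Longrightarrow> t \<in> space (M i) \<Longrightarrow> 0 \<le> g i x t"
    and g_prob: "\<And>i x. i < d \<Longrightarrow> x \<in> space (tgs_space d M) \<Longrightarrow> (\<integral>\<^sup>+ t. ennreal (g i x t) \<partial>(M i)) = 1"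
    and g_dep: "\<And>i x s. i < d \<Longrightarrow> x \<in> space (tgs_space d M) \<Longrightarrow> s \<in> space (M i) \<Longrightarrow>
                 g i (x(i := s)) = g i x"
    and g_joint_meas: "\<And>i. i < d \<Longrightarrow> (\<lambda>x. g i x (x i)) \<in> borel_measurable (tgs_space d M)"
    and g_abs_cont: "\<And>i x. i < d \<Longrightarrow> x \<in> space (tgs_space d M) \<Longrightarrow>
                 0 < marg M f i x \<Longrightarrow> marg M f i x < \<infinity> \<Longrightarrow>
                 (AE t in M i. fcond M f i (x(i := t)) = 0 \<longrightarrow> g i x t = 0)"
    and h_meas: "h \<in> borel_measurable (tgs_space d M)"
    and h_int: "integrable (target d M f) h"
  shows "var_W d M f g \<le> bconst d M f g - 1
         \<and> var_SIS d M f g h \<le> bconst d M f g * var_f d M f h"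
proof -
  define N where "N = PiM {..<d} M"
  have tN: "tgs_space d M = N" by (simp add: tgs_space_def N_def)
  define M' where "M' j = (if j < d then M j else M 0)" for j
  have ps: "product_sigma_finite M'"
    unfolding product_sigma_finite_def M'_def using sf d_pos by auto
  have PE: "PiM {..<d} M' = N" unfolding N_def by (rule PiM_cong) (auto simp: M'_def)
  have margE: "marg M' f i = marg M f i" if "i < d" for i
    using that by (simp add: marg_def M'_def fun_eq_iff)
  have pratioE: "pratio M' f g i = pratio M f g i" if "i < d" for i
    using margE[OF that] by (simp add: pratio_def fcond_def fun_eq_iff)
  have fm[measurable]: "f \<in> borel_measurable N" using f_meas tN by simp
  have fnn: "\<And>x. x \<in> space N \<Longrightarrow> 0 \<le> f x" using f_nonneg tN by simp
  have fprob: "(\<integral>\<^sup>+ x. ennreal (f x) \<partial>N) = 1" using f_prob tN by simp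
  have fm': "f \<in> borel_measurable (PiM {..<d} M')" using fm PE by simp
  have fnn': "\<And>x. x \<in> space (PiM {..<d} M') \<Longrightarrow> 0 \<le> f x" using fnn PE by simp
  have fprob': "(\<integral>\<^sup>+ x. ennreal (f x) \<partial>PiM {..<d} M') = 1" using fprob PE by simp
  have margM[measurable]: "marg M f i \<in> borel_measurable N" if "i < d" for i
    using marg_meas_full[OF ps that fm' fnn' fprob'] margE[OF that] PE by simp
  have gj[measurable]: "(\<lambda>x. g i x (x i)) \<in> borel_measurable N" if "i < d" for i
    using g_joint_meas[OF that] tN by simp
  have pm[measurable]: "pratio M f g i \<in> borel_measurable N" if "i < d" for i
    unfolding pratio_def fcond_def using margM[OF that] gj[OF that] by measurable
  have Zm[measurable]: "Zfun d M f g \<in> borel_measurable N"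
    unfolding Zfun_def using pm by measurable
  have wm[measurable]: "wfun d M f g \<in> borel_measurable N"
    unfolding wfun_def using Zm by measurable
  have pnn: "0 \<le> pratio M f g i x" if "i < d" "x \<in> space N" for i x
  proof -
    have "x i \<in> space (M i)" using that by (auto simp: N_def space_PiM)
    then have "0 \<le> g i x (x i)" using g_nonneg[OF that(1)] that(2) tN by simp
    moreover have "0 \<le> fcond M f i x" unfolding fcond_def using fnn[OF that(2)] by simp
    ultimately show ?thesis unfolding pratio_def by simp
  qed
  have Znn: "0 \<le> Zfun d M f g x" if "x \<in> space N" for x
    unfolding Zfun_def using pnn[OF _ that] by (intro divide_nonneg_nonneg sum_nonneg) auto
  obtain x00 where x00: "x00 \<in> space N"
  proof (cases "space N = {}")
    case True then have "(\<integral>\<^sup>+ x. ennreal (f x) \<partial>N) = 0" by (rule nn_integral_empty)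
    with fprob show ?thesis by simp
  qed auto
  have good_AE: "AE x in N. 0 < f x \<longrightarrow> (\<forall>i\<in>{..<d}. 0 < marg M f i x \<and> marg M f i x < \<infinity>)"
  proof -
    have "AE x in N. \<forall>i\<in>{..<d}. 0 < f x \<longrightarrow> 0 < marg M f i x \<and> marg M f i x < \<infinity>"
    proof (rule AE_finite_allI)
      fix i assume "i \<in> {..<d}"
      then have i: "i < d" by simp
      show "AE x in N. 0 < f x \<longrightarrow> 0 < marg M f i x \<and> marg M f i x < \<infinity>"
        using marg_good_AE[OF ps i fm' fnn' fprob'] unfolding margE[OF i] PE .
    qed simp
    then show ?thesis by auto
  qed
  define T where "T = target d M f"
  have TN: "T = density N (\<lambda>x. ennreal (f x))" by (simp add: T_def target_def tN)
  have PT: "prob_space T"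
  proof
    have "emeasure T (space T) = (\<integral>\<^sup>+ x. ennreal (f x) * indicator (space N) x \<partial>N)"
      unfolding TN by (simp add: emeasure_density)
    also have "\<dots> = (\<integral>\<^sup>+ x. ennreal (f x) \<partial>N)"
      by (intro nn_integral_cong) simp
    finally show "emeasure T (space T) = 1" using fprob by simp
  qed
  interpret T: prob_space T by (rule PT)
  have AE_T: "AE x in T. P x" if "AE x in N. 0 < f x \<longrightarrow> P x" for P
    unfolding TN using that by (subst AE_density) auto
  define good where "good x = (x \<in> space N \<and> 0 < f x \<and> (\<forall>i\<in>{..<d}. 0 < marg M f i x \<and> marg M f i x < \<infinity>))" for x
  have goodN: "AE x in N. 0 < f x \<longrightarrow> good x"
    using good_AE by (auto simp: good_def)
  have good_T: "AE x in T. good x" using goodN by (rule AE_T)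
  obtain x0 where x0: "good x0"
  proof -
    have "\<exists>x. good x"
    proof (rule ccontr)
      assume "\<not> (\<exists>x. good x)"
      then have "AE x in T. False" using good_T by (auto elim: AE_mp)
      then show False by (simp add: T.AE_False)
    qed
    then show ?thesis using that by blast
  qed
  define b where "b = bconst d M f g"
  have bup: "ereal (fcond M f i x) / ereal (g i x (x i)) \<le> b" if "i < d" "x \<in> space N" for i x
  proof -
    have "(i, x) \<in> {..<d} \<times> space N" using that by simp
    from SUP_upper[OF this, of "\<lambda>ix. ereal (fcond M f (fst ix) (snd ix)) / ereal (g (fst ix) (snd ix) (snd ix (fst ix)))"]
    show ?thesis unfolding b_def bconst_def tN by simp
  qed
  have fcpos: "0 < fcond M f i x" if "good x" "i < d" for i x
    using that unfolding good_def fcond_def by (auto simp: enn2real_positive_iff)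
  have gnn': "0 \<le> g i x (x i)" if "x \<in> space N" "i < d" for i x
  proof -
    have "x i \<in> space (M i)" using that by (auto simp: N_def space_PiM)
    then show ?thesis using g_nonneg[OF that(2)] that(1) tN by simp
  qed
  have ginf: "b = \<infinity>" if "good x" "i < d" "g i x (x i) = 0" for i x
  proof -
    have "ereal (fcond M f i x) / ereal (g i x (x i)) = \<infinity>"
      using fcpos[OF that(1,2)] that(3) by simp
    moreover have "x \<in> space N" using that(1) by (simp add: good_def)
    ultimately have "\<infinity> \<le> b" using bup[OF that(2), of x] by simp
    then show ?thesis by (cases b) auto
  qed
  have bpos: "0 < b"
  proof (cases "g 0 x0 (x0 0) = 0")
    case True then show ?thesis using ginf[OF x0 _ True] d_pos by simp
  next
    case False
    have "0 < fcond M f 0 x0 / g 0 x0 (x0 0)"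
      using fcpos[OF x0] d_pos gnn'[of x0 0] x0 False by (auto simp: good_def)
    also have "ereal \<dots> \<le> b" using bup[of 0 x0] d_pos x0 False by (auto simp: good_def)
    finally show ?thesis by (simp add: zero_ereal_def)
  qed
  define c where "c = (\<integral> y. h y \<partial>T)"
  define V where "V = (\<integral>\<^sup>+ x. ennreal ((h x - c)\<^sup>2) \<partial>T)"
  have varf: "var_f d M f h = enn2ereal V"
    unfolding var_f_def V_def c_def T_def[symmetric] using var_identity[OF PT h_int[folded T_def]] .
  have varSIS: "var_SIS d M f g h = enn2ereal (\<integral>\<^sup>+ x. ennreal ((h x - c)\<^sup>2 * wfun d M f g x) \<partial>T)"
    unfolding var_SIS_def c_def T_def ..
  have hm[measurable]: "h \<in> borel_measurable T" using h_int[folded T_def] by (rule borel_measurable_integrable)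
  show ?thesis
  proof (cases b)
    case PInf
    have W: "var_W d M f g \<le> b - 1" using PInf by simp
    have S: "var_SIS d M f g h \<le> b * var_f d M f h"
    proof (cases "V = 0")
      case True
      then have "AE x in T. ennreal ((h x - c)\<^sup>2) = 0"
        using nn_integral_0_iff_AE[of "\<lambda>x. ennreal ((h x - c)\<^sup>2)" T] unfolding V_def by simp
      then have "(\<integral>\<^sup>+ x. ennreal ((h x - c)\<^sup>2 * wfun d M f g x) \<partial>T) = (\<integral>\<^sup>+ x. 0 \<partial>T)"
        by (intro nn_integral_cong_AE) (auto elim: AE_mp)
      then show ?thesis using True by (simp add: varSIS varf zero_ennreal.rep_eq)
    next
      case False
      then have "0 < enn2ereal V"
        by (metis enn2ereal_nonneg order_le_less zero_ennreal.rep_eq enn2ereal_inject)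
      then have e: "b * var_f d M f h = \<infinity>" using PInf by (simp add: varf)
      show ?thesis unfolding e by simp
    qed
    show ?thesis using W S by (simp add: b_def)
  next
    case (real B)
    have B0: "0 < B" using bpos real by simp
    have ptw: "0 < Zfun d M f g x \<and> wfun d M f g x \<le> B \<and> Zfun d M f g x * wfun d M f g x = 1"
      if gx: "good x" for x
    proof -
      have xs: "x \<in> space N" using gx by (simp add: good_def)
      have pl: "1 / B \<le> pratio M f g i x" if i: "i < d" for i
      proof -
        have gne: "g i x (x i) \<noteq> 0" using ginf[OF gx i] real by auto
        have gp: "0 < g i x (x i)" using gne gnn'[OF xs i] by simp
        have fcp: "0 < fcond M f i x" by (rule fcpos[OF gx i])
        have "ereal (fcond M f i x / g i x (x i)) \<le> ereal B" using bup[OF i xs] gne real by simp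
        then have "fcond M f i x / g i x (x i) \<le> B" by simp
        then have "fcond M f i x \<le> B * g i x (x i)" using gp by (simp add: divide_le_eq)
        then show ?thesis using B0 fcp gp unfolding pratio_def by (simp add: divide_le_eq le_divide_eq mult.commute)
      qed
      have "(\<Sum>i<d. 1 / B) \<le> (\<Sum>i<d. pratio M f g i x)" by (rule sum_mono) (use pl in simp)
      then have "real d * (1 / B) \<le> (\<Sum>i<d. pratio M f g i x)" by simp
      then have Zl: "1 / B \<le> Zfun d M f g x" unfolding Zfun_def using d_pos
        by (simp add: le_divide_eq mult.commute)
      have Zp: "0 < Zfun d M f g x" using Zl B0 by (meson divide_pos_pos less_le_trans zero_less_one)
      have "wfun d M f g x \<le> B" unfolding wfun_def using Zl Zp B0
        by (simp add: divide_le_eq mult.commute)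
      then show ?thesis using Zp by (simp add: wfun_def)
    qed
    have S: "var_SIS d M f g h \<le> b * var_f d M f h"
    proof -
      have "(\<integral>\<^sup>+ x. ennreal ((h x - c)\<^sup>2 * wfun d M f g x) \<partial>T) \<le> (\<integral>\<^sup>+ x. ennreal B * ennreal ((h x - c)\<^sup>2) \<partial>T)"
      proof (rule nn_integral_mono_AE)
        show "AE x in T. ennreal ((h x - c)\<^sup>2 * wfun d M f g x) \<le> ennreal B * ennreal ((h x - c)\<^sup>2)"
          using good_T
        proof (rule AE_mp, intro AE_I2 impI)
          fix x assume "good x"
          then have "wfun d M f g x \<le> B" using ptw by blast
          then have "(h x - c)\<^sup>2 * wfun d M f g x \<le> B * (h x - c)\<^sup>2"
            by (metis mult.commute mult_left_mono zero_le_power2)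
          then show "ennreal ((h x - c)\<^sup>2 * wfun d M f g x) \<le> ennreal B * ennreal ((h x - c)\<^sup>2)"
            using B0 by (simp add: ennreal_mult[symmetric] ennreal_leI)
        qed
      qed
      also have "\<dots> = ennreal B * V" unfolding V_def by (rule nn_integral_cmult) measurable
      finally have le: "(\<integral>\<^sup>+ x. ennreal ((h x - c)\<^sup>2 * wfun d M f g x) \<partial>T) \<le> ennreal B * V" .
      have "var_SIS d M f g h \<le> enn2ereal (ennreal B * V)"
        unfolding varSIS using le by (simp add: less_eq_ennreal.rep_eq)
      also have "\<dots> = b * var_f d M f h"
        using B0 real by (simp add: varf times_ennreal.rep_eq)
      finally show ?thesis .
    qed
    have fZm[measurable]: "(\<lambda>x. f x * Zfun d M f g x) \<in> borel_measurable N" by measurable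
    have fZnn: "0 \<le> f x * Zfun d M f g x" if "x \<in> space N" for x
      using fnn[OF that] Znn[OF that] by simp
    have D: "tgs_dist d M f g = density N (\<lambda>x. ennreal (f x * Zfun d M f g x))"
      by (simp add: tgs_dist_def tN)
    have f0: "f x = 0" if "x \<in> space N" "\<not> 0 < f x" for x
      using fnn[OF that(1)] that(2) by simp
    have fw_eq: "AE x in N. (f x * Zfun d M f g x) *\<^sub>R wfun d M f g x = f x"
      using goodN
    proof (rule AE_mp, intro AE_I2 impI)
      fix x assume x: "x \<in> space N" and gi: "0 < f x \<longrightarrow> good x"
      show "(f x * Zfun d M f g x) *\<^sub>R wfun d M f g x = f x"
      proof (cases "0 < f x")
        case True then show ?thesis using ptw gi by (simp add: mult.assoc)
      next
        case False then show ?thesis using f0[OF x] by simp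
      qed
    qed
    have cw: "(\<integral> y. wfun d M f g y \<partial>tgs_dist d M f g) = 1"
    proof -
      have "(\<integral> y. wfun d M f g y \<partial>tgs_dist d M f g) = (\<integral> x. (f x * Zfun d M f g x) *\<^sub>R wfun d M f g x \<partial>N)"
        unfolding D by (rule integral_density) (auto intro: AE_I2 fZnn)
      also have "\<dots> = (\<integral> x. f x \<partial>N)"
        by (rule integral_cong_AE) (use fw_eq in auto)
      also have "\<dots> = enn2real (\<integral>\<^sup>+ x. ennreal (f x) \<partial>N)"
        by (rule integral_eq_nn_integral) (auto intro: AE_I2 fnn)
      finally show ?thesis using fprob by simp
    qed
    define X where "X = (\<integral>\<^sup>+ x. ennreal (f x * Zfun d M f g x * (wfun d M f g x - 1)\<^sup>2) \<partial>N)"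
    have varW: "var_W d M f g = enn2ereal X"
    proof -
      have "(\<integral>\<^sup>+ x. ennreal ((wfun d M f g x - 1)\<^sup>2) \<partial>tgs_dist d M f g)
          = (\<integral>\<^sup>+ x. ennreal (f x * Zfun d M f g x) * ennreal ((wfun d M f g x - 1)\<^sup>2) \<partial>N)"
        unfolding D by (rule nn_integral_density) measurable
      also have "\<dots> = X" unfolding X_def
        by (intro nn_integral_cong) (simp add: fZnn ennreal_mult[symmetric])
      finally show ?thesis unfolding var_W_def cw by simp
    qed
    have fpi: "(\<integral>\<^sup>+ x. ennreal (f x * pratio M f g i x) \<partial>N) \<le> 1" if i: "i < d" for i
    proof -
      have Mi: "M' i = M i" using i by (simp add: M'_def)
      have sN: "space (PiM {..<d} M') = space N" using PE by simp
      have x00i: "x00 i \<in> space (M' i)" using x00 i Mi by (auto simp: N_def space_PiM)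
      have "(\<integral>\<^sup>+ x. ennreal (f x * pratio M' f g i x) \<partial>PiM {..<d} M') \<le> 1"
      proof (rule fp_int[OF ps i fm' fnn' fprob'])
        show "(\<lambda>x. g i x (x i)) \<in> borel_measurable (PiM {..<d} M')" using gj[OF i] PE by simp
        show "\<And>x. x \<in> space (PiM {..<d} M') \<Longrightarrow> g i x \<in> borel_measurable (M' i)"
          using g_meas[OF i] sN tN Mi by simp
        show "\<And>x t. x \<in> space (PiM {..<d} M') \<Longrightarrow> t \<in> space (M' i) \<Longrightarrow> 0 \<le> g i x t"
          using g_nonneg[OF i] sN tN Mi by simp
        show "\<And>x. x \<in> space (PiM {..<d} M') \<Longrightarrow> (\<integral>\<^sup>+ t. ennreal (g i x t) \<partial>M' i) = 1"
          using g_prob[OF i] sN tN Mi by simp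
        show "\<And>x s. x \<in> space (PiM {..<d} M') \<Longrightarrow> s \<in> space (M' i) \<Longrightarrow> g i (x(i := s)) = g i x"
          using g_dep[OF i] sN tN Mi by simp
      qed (use x00i in auto)
      then show ?thesis unfolding pratioE[OF i] PE .
    qed
    have fZint: "(\<integral>\<^sup>+ x. ennreal (f x * Zfun d M f g x) \<partial>N) \<le> 1"
    proof -
      have "(\<integral>\<^sup>+ x. ennreal (f x * Zfun d M f g x) \<partial>N)
          = (\<integral>\<^sup>+ x. ennreal (1 / real d) * (\<Sum>i<d. ennreal (f x * pratio M f g i x)) \<partial>N)"
      proof (intro nn_integral_cong)
        fix x assume x: "x \<in> space N"
        have nn: "\<And>i. i \<in> {..<d} \<Longrightarrow> 0 \<le> f x * pratio M f g i x"
          using fnn[OF x] pnn[OF _ x] by simp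
        have e1: "f x * Zfun d M f g x = (1 / real d) * (\<Sum>i<d. f x * pratio M f g i x)"
          unfolding Zfun_def by (simp add: sum_distrib_left sum_divide_distrib)
        have e2: "(\<Sum>i<d. ennreal (f x * pratio M f g i x)) = ennreal (\<Sum>i<d. f x * pratio M f g i x)"
          by (rule sum_ennreal) (use nn in auto)
        have S0: "0 \<le> (\<Sum>i<d. f x * pratio M f g i x)" by (rule sum_nonneg) (use nn in auto)
        show "ennreal (f x * Zfun d M f g x) = ennreal (1 / real d) * (\<Sum>i<d. ennreal (f x * pratio M f g i x))"
          unfolding e1 e2 using S0 by (subst ennreal_mult) auto
      qed
      also have "\<dots> = ennreal (1 / real d) * (\<Sum>i<d. (\<integral>\<^sup>+ x. ennreal (f x * pratio M f g i x) \<partial>N))"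
        by (subst nn_integral_cmult) (use pm in \<open>measurable, subst nn_integral_sum, auto\<close>)
      also have "\<dots> \<le> ennreal (1 / real d) * (\<Sum>i<d. 1)"
        by (intro mult_left_mono sum_mono fpi) auto
      also have "\<dots> = 1" using d_pos
        by (simp add: ennreal_of_nat_eq_real_of_nat ennreal_mult[symmetric])
      finally show ?thesis .
    qed
    have X2: "X + 2 \<le> ennreal (B + 1)"
    proof -
      have "X + 2 = X + 2 * (\<integral>\<^sup>+ x. ennreal (f x) \<partial>N)" using fprob by simp
      also have "\<dots> = (\<integral>\<^sup>+ x. ennreal (f x * Zfun d M f g x * (wfun d M f g x - 1)\<^sup>2) + 2 * ennreal (f x) \<partial>N)"
        unfolding X_def by (subst nn_integral_add) (auto simp: nn_integral_cmult)
      also have "\<dots> \<le> (\<integral>\<^sup>+ x. ennreal B * ennreal (f x) + ennreal (f x * Zfun d M f g x) \<partial>N)"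
      proof (rule nn_integral_mono_AE)
        show "AE x in N. ennreal (f x * Zfun d M f g x * (wfun d M f g x - 1)\<^sup>2) + 2 * ennreal (f x)
            \<le> ennreal B * ennreal (f x) + ennreal (f x * Zfun d M f g x)"
          using goodN
        proof (rule AE_mp, intro AE_I2 impI)
          fix x assume x: "x \<in> space N" and gi: "0 < f x \<longrightarrow> good x"
          show "ennreal (f x * Zfun d M f g x * (wfun d M f g x - 1)\<^sup>2) + 2 * ennreal (f x)
            \<le> ennreal B * ennreal (f x) + ennreal (f x * Zfun d M f g x)"
          proof (cases "0 < f x")
            case False then show ?thesis using f0[OF x] by simp
          next
            case True
            then have pt: "0 < Zfun d M f g x" "wfun d M f g x \<le> B" "Zfun d M f g x * wfun d M f g x = 1"
              using ptw gi by auto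
            define Zx where "Zx = Zfun d M f g x"
            define wx where "wx = wfun d M f g x"
            have pt': "0 < Zx" "wx \<le> B" "Zx * wx = 1" using pt by (auto simp: Zx_def wx_def)
            have "f x * Zx * (wx - 1)\<^sup>2 + 2 * f x = f x * (Zx * wx * wx - 2 * (Zx * wx) + Zx + 2)"
              by (simp add: power2_eq_square algebra_simps)
            also have "\<dots> = f x * (wx + Zx)" using pt'(3) by simp
            also have "\<dots> \<le> f x * (B + Zx)" using pt'(2) True by (intro mult_left_mono) auto
            finally have le: "f x * Zx * (wx - 1)\<^sup>2 + 2 * f x \<le> B * f x + f x * Zx"
              by (simp add: algebra_simps)
            have a0: "0 \<le> f x * Zx * (wx - 1)\<^sup>2" using True pt'(1) by simp
            have "ennreal (f x * Zx * (wx - 1)\<^sup>2) + 2 * ennreal (f x) = ennreal (f x * Zx * (wx - 1)\<^sup>2 + 2 * f x)"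
              using a0 True by (simp add: ennreal_mult)
            also have "\<dots> \<le> ennreal (B * f x + f x * Zx)" using le by (rule ennreal_leI)
            also have "\<dots> = ennreal B * ennreal (f x) + ennreal (f x * Zx)"
              using B0 True pt'(1) by (simp add: ennreal_mult)
            finally show ?thesis unfolding Zx_def wx_def .
          qed
        qed
      qed
      also have "\<dots> = ennreal B * (\<integral>\<^sup>+ x. ennreal (f x) \<partial>N) + (\<integral>\<^sup>+ x. ennreal (f x * Zfun d M f g x) \<partial>N)"
        by (subst nn_integral_add) (auto simp: nn_integral_cmult)
      also have "\<dots> \<le> ennreal B * 1 + 1" using fprob fZint by (intro add_mono) auto
      also have "\<dots> = ennreal (B + 1)" using B0 by simp
      finally show ?thesis .
    qed
    have W: "var_W d M f g \<le> b - 1"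
    proof -
      have "X \<noteq> \<top>" using X2 by (auto simp: top_unique)
      then obtain x1 where x1: "X = ennreal x1" "0 \<le> x1" by (cases X rule: ennreal_cases) auto
      have "ennreal (x1 + 2) \<le> ennreal (B + 1)" using X2 x1 by simp
      moreover have "0 \<le> B + 1" using B0 by simp
      ultimately have "x1 + 2 \<le> B + 1" using ennreal_le_iff by blast
      moreover have "ereal B - 1 = ereal (B - 1)" by (simp add: one_ereal_def)
      ultimately show ?thesis using x1 real by (simp add: varW)
    qed
    show ?thesis using W S by (simp add: b_def)
  next
    case MInf
    with bpos show ?thesis by simp
  qed
qed

end
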